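(* Let $x_0<\dots<x_n$ and $\hat x_0<\dots<\hat x_n$ be real numbers with $\hat x_0=x_0$, $\hat x_n=x_n$, let $\mathbf{y}\in\mathbb{R}^{n+1}$, let $z_k=z_k(\mathbf{x},\hat{\mathbf{x}})$, and suppose $\Lambda(\hat{\mathbf{x}})\|\mathbf{z}\|_\infty<1$. Then for every $t\in[x_0,x_n]$, \[ \frac{|E(t;\mathbf{y},\mathbf{z})|}{1+\Lambda(\hat{\mathbf{x}})\|\mathbf{z}\|_\infty}\ \le\ \bigl|q(t;\hat{\mathbf{x}},\mathbf{y},\lambda(\mathbf{x}))-P_{\mathbf{y}}(t)\bigr|\ \le\ \frac{|E(t;\mathbf{y},\mathbf{z})|}{1-\Lambda(\hat{\mathbf{x}})\|\mathbf{z}\|_\infty}, \] and for each such $t$ there exists $\mathbf{y}'\in\mathbb{R}^{n+1}$ with $q(t;\hat{\mathbf{x}},\mathbf{y},\lambda(\mathbf{x}))=P_{\mathbf{y}'}(t)$ and \[ |y'_k-y_k|\le\frac{|z_k|+\Lambda(\hat{\mathbf{x}})\|\mathbf{z}\|_\infty}{1-\Lambda(\hat{\mathbf{x}})\|\mathbf{z}\|_\infty}\,|y_k|\qquad(0\le k\le n). \]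
   Context: $\lambda_k(\mathbf{x}):=1/\prod_{j\neq k}(x_k-x_j)$; $z_k(\mathbf{x},\hat{\mathbf{x}}):=(\lambda_k(\mathbf{x})-\lambda_k(\hat{\mathbf{x}}))/\lambda_k(\hat{\mathbf{x}})$. The second barycentric formula is $q(t;\mathbf{u},\mathbf{y},\mathbf{w}):=\dfrac{\sum_{k}\frac{w_ky_k}{t-u_k}}{\sum_k\frac{w_k}{t-u_k}}$, with value $y_k$ at $t=u_k$ (its limit). For $\mathbf{v}\in\mathbb{R}^{n+1}$, $P_{\mathbf{v}}$ is the polynomial of degree $\le n$ with $P_{\mathbf{v}}(\hat x_k)=v_k$; $\mathbf{y}\mathbf{z}$ is the componentwise product. The error polynomial is $E(t;\mathbf{y},\mathbf{z}):=P_{\mathbf{y}\mathbf{z}}(t)-P_{\mathbf{y}}(t)P_{\mathbf{z}}(t)$. $\Lambda(\hat{\mathbf{x}}):=\max_{t\in[x_0,x_n]}\sum_j|\ell_j(t)|$ with $\ell_j$ the Lagrange polynomials for $\hat{\mathbf{x}}$. *)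

theory Defs
  imports "HOL-Analysis.Analysis"
begin

text \<open>Vectors in R^(n+1) are represented as functions nat => real, indices 0..n.\<close>

definition lam :: "nat \<Rightarrow> (nat \<Rightarrow> real) \<Rightarrow> nat \<Rightarrow> real" where
  "lam n x k = 1 / (\<Prod>j\<in>{0..n} - {k}. (x k - x j))"

definition zvec :: "nat \<Rightarrow> (nat \<Rightarrow> real) \<Rightarrow> (nat \<Rightarrow> real) \<Rightarrow> nat \<Rightarrow> real" where
  "zvec n x xh k = (lam n x k - lam n xh k) / lam n xh k"

text \<open>Second barycentric formula, with its limit value y_k at the node t = u_k.\<close>
definition bary :: "nat \<Rightarrow> real \<Rightarrow> (nat \<Rightarrow> real) \<Rightarrow> (nat \<Rightarrow> real) \<Rightarrow> (nat \<Rightarrow> real) \<Rightarrow> real" where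
  "bary n t u y w =
     (if \<exists>k\<in>{0..n}. t = u k then y (SOME k. k \<in> {0..n} \<and> t = u k)
      else (\<Sum>k=0..n. w k * y k / (t - u k)) / (\<Sum>k=0..n. w k / (t - u k)))"

definition lagr :: "nat \<Rightarrow> (nat \<Rightarrow> real) \<Rightarrow> nat \<Rightarrow> real \<Rightarrow> real" where
  "lagr n xh j t = (\<Prod>i\<in>{0..n} - {j}. (t - xh i) / (xh j - xh i))"

definition interp :: "nat \<Rightarrow> (nat \<Rightarrow> real) \<Rightarrow> (nat \<Rightarrow> real) \<Rightarrow> real \<Rightarrow> real" where
  "interp n xh v t = (\<Sum>j=0..n. v j * lagr n xh j t)"

definition errpoly :: "nat \<Rightarrow> (nat \<Rightarrow> real) \<Rightarrow> (nat \<Rightarrow> real) \<Rightarrow> (nat \<Rightarrow> real) \<Rightarrow> real \<Rightarrow> real" where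
  "errpoly n xh y z t = interp n xh (\<lambda>k. y k * z k) t - interp n xh y t * interp n xh z t"

text \<open>Lebesgue constant on [xh_0, xh_n] (a maximum of a continuous function on a compact interval).\<close>
definition lebesgue_const :: "nat \<Rightarrow> (nat \<Rightarrow> real) \<Rightarrow> real" where
  "lebesgue_const n xh = (SUP t\<in>{xh 0..xh n}. (\<Sum>j=0..n. \<bar>lagr n xh j t\<bar>))"

definition supnorm :: "nat \<Rightarrow> (nat \<Rightarrow> real) \<Rightarrow> real" where
  "supnorm n v = Max ((\<lambda>k. \<bar>v k\<bar>) ` {0..n})"

end

theory Submission
  imports Defs "HOL-Computational_Algebra.Polynomial"
begin

lemma xh_mono:
  fixes xh :: "nat \<Rightarrow> real"
  assumes inc: "\<forall>i<n. xh i < xh (Suc i)"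
  shows "i < j \<Longrightarrow> j \<le> n \<Longrightarrow> xh i < xh j"
proof (induction j)
  case 0 then show ?case by simp
next
  case (Suc j)
  show ?case
  proof (cases "i = j")
    case True then show ?thesis using inc Suc by simp
  next
    case False
    then have "xh i < xh j" using Suc by simp
    also have "\<dots> < xh (Suc j)" using inc Suc by simp
    finally show ?thesis .
  qed
qed

lemma xh_inj:
  fixes xh :: "nat \<Rightarrow> real"
  assumes inc: "\<forall>i<n. xh i < xh (Suc i)"
  shows "i \<le> n \<Longrightarrow> j \<le> n \<Longrightarrow> xh i = xh j \<Longrightarrow> i = j"
  using xh_mono[OF inc, of i j] xh_mono[OF inc, of j i]
  by (metis less_irrefl nat_neq_iff)

lemma xh_neq:
  fixes xh :: "nat \<Rightarrow> real"
  assumes inc: "\<forall>i<n. xh i < xh (Suc i)"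
  shows "i \<le> n \<Longrightarrow> j \<le> n \<Longrightarrow> i \<noteq> j \<Longrightarrow> xh i \<noteq> xh j"
  using xh_inj[OF inc, of i j] by blast

lemma lagr_node:
  fixes xh :: "nat \<Rightarrow> real"
  assumes inc: "\<forall>i<n. xh i < xh (Suc i)"
  assumes "j \<le> n" "k \<le> n"
  shows "lagr n xh j (xh k) = (if j = k then 1 else 0)"
proof (cases "j = k")
  case True
  have "\<And>i. i \<in> {0..n} - {j} \<Longrightarrow> (xh k - xh i) / (xh j - xh i) = 1"
    using True xh_inj[OF inc, of j] assms by auto
  then show ?thesis using True unfolding lagr_def by simp
next
  case False
  have "k \<in> {0..n} - {j}" using False assms by auto
  then have "(\<Prod>i\<in>{0..n} - {j}. (xh k - xh i) / (xh j - xh i)) = 0"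
    by (intro prod_zero) auto
  then show ?thesis using False unfolding lagr_def by simp
qed

lemma interp_node:
  fixes xh :: "nat \<Rightarrow> real"
  assumes inc: "\<forall>i<n. xh i < xh (Suc i)"
  assumes "k \<le> n"
  shows "interp n xh v (xh k) = v k"
proof -
  have "interp n xh v (xh k) = (\<Sum>j=0..n. if j = k then v j else 0)"
    unfolding interp_def using lagr_node[OF inc] assms by (intro sum.cong) auto
  then show ?thesis using assms by simp
qed

lemma lagr_sum:
  fixes xh :: "nat \<Rightarrow> real"
  assumes inc: "\<forall>i<n. xh i < xh (Suc i)"
  shows "(\<Sum>j=0..n. lagr n xh j t) = 1"
proof -
  define lp where "lp j = (\<Prod>i\<in>{0..n} - {j}. smult (1 / (xh j - xh i)) [:- xh i, 1:])" for j
  have plp: "poly (lp j) s = lagr n xh j s" for j s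
    unfolding lp_def lagr_def poly_prod by (intro prod.cong) (auto simp: diff_divide_distrib)
  have dlp: "degree (lp j) \<le> n" if "j \<le> n" for j
  proof -
    have "degree (lp j) \<le> sum (degree \<circ> (\<lambda>i. smult (1 / (xh j - xh i)) [:- xh i, 1:])) ({0..n} - {j})"
      unfolding lp_def by (rule degree_prod_sum_le) simp
    also have "\<dots> \<le> sum (\<lambda>i. 1) ({0..n} - {j})"
      by (intro sum_mono) (simp add: degree_smult_le)
    also have "\<dots> = n" using that by simp
    finally show ?thesis .
  qed
  have eq: "(\<Sum>j=0..n. lp j) = 1"
  proof (rule poly_eqI_degree[where A = "xh ` {0..n}"])
    fix s assume "s \<in> xh ` {0..n}"
    then obtain k where k: "k \<le> n" "s = xh k" by auto
    have "poly (\<Sum>j=0..n. lp j) s = (\<Sum>j=0..n. lagr n xh j (xh k))"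
      by (simp add: poly_sum plp k)
    also have "\<dots> = (\<Sum>j=0..n. if j = k then 1 else 0)"
      using lagr_node[OF inc] k by (intro sum.cong) auto
    also have "\<dots> = 1" using k by simp
    finally show "poly (\<Sum>j=0..n. lp j) s = poly 1 s" by simp
  next
    have ci: "card (xh ` {0..n}) = Suc n"
      using card_image[of xh "{0..n}"] xh_inj[OF inc] unfolding inj_on_def by auto
    have "degree (\<Sum>j=0..n. lp j) \<le> n" by (rule degree_sum_le) (auto intro: dlp)
    then show "degree (\<Sum>j=0..n. lp j) < card (xh ` {0..n})" using ci by simp
    show "degree (1::real poly) < card (xh ` {0..n})" using ci by simp
  qed
  have "(\<Sum>j=0..n. lagr n xh j t) = poly (\<Sum>j=0..n. lp j) t"
    by (simp add: poly_sum plp)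
  then show ?thesis using eq by simp
qed

lemma lam_nz:
  fixes xh :: "nat \<Rightarrow> real"
  assumes inc: "\<forall>i<n. xh i < xh (Suc i)" and "j \<le> n"
  shows "lam n xh j \<noteq> 0"
proof -
  have "(\<Prod>i\<in>{0..n} - {j}. (xh j - xh i)) \<noteq> 0"
  proof -
    have "\<forall>i\<in>{0..n} - {j}. xh j - xh i \<noteq> 0"
    proof
      fix i assume i: "i \<in> {0..n} - {j}"
      show "xh j - xh i \<noteq> 0"
      proof
        assume "xh j - xh i = 0"
        then have "j = i" using xh_inj[OF inc, of j i] i assms(2) by simp
        then show False using i by simp
      qed
    qed
    then show ?thesis by (simp add: prod_zero_iff)
  qed
  then show ?thesis unfolding lam_def by simp
qed

lemma lagr_formula:
  fixes xh :: "nat \<Rightarrow> real"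
  assumes "j \<le> n" and nn: "t \<noteq> xh j"
  shows "lagr n xh j t = lam n xh j * (\<Prod>i\<in>{0..n}. (t - xh i)) / (t - xh j)"
proof -
  have "lagr n xh j t = (\<Prod>i\<in>{0..n} - {j}. (t - xh i)) / (\<Prod>i\<in>{0..n} - {j}. (xh j - xh i))"
    unfolding lagr_def by (rule prod_dividef)
  moreover have "(\<Prod>i\<in>{0..n}. (t - xh i)) = (t - xh j) * (\<Prod>i\<in>{0..n} - {j}. (t - xh i))"
    using assms by (subst prod.remove[of _ j]) auto
  ultimately show ?thesis using nn unfolding lam_def by simp
qed

lemma leb_bound:
  fixes xh :: "nat \<Rightarrow> real"
  assumes inc: "\<forall>i<n. xh i < xh (Suc i)" and t: "t \<in> {xh 0..xh n}"
  shows "(\<Sum>j=0..n. \<bar>lagr n xh j t\<bar>) \<le> lebesgue_const n xh"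
proof -
  have cont: "continuous_on {xh 0..xh n} (\<lambda>t. \<Sum>j=0..n. \<bar>lagr n xh j t\<bar>)"
    unfolding lagr_def
    using xh_neq[OF inc] by (intro continuous_intros) auto
  have "bounded ((\<lambda>t. \<Sum>j=0..n. \<bar>lagr n xh j t\<bar>) ` {xh 0..xh n})"
    by (intro compact_imp_bounded compact_continuous_image cont) simp
  then have "bdd_above ((\<lambda>t. \<Sum>j=0..n. \<bar>lagr n xh j t\<bar>) ` {xh 0..xh n})"
    by (rule bounded_imp_bdd_above)
  then show ?thesis unfolding lebesgue_const_def using t by (rule cSUP_upper2) simp
qed

lemma supnorm_ge:
  fixes v :: "nat \<Rightarrow> real"
  assumes "k \<le> n"
  shows "\<bar>v k\<bar> \<le> supnorm n v"
  unfolding supnorm_def using assms by (intro Max_ge) auto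

lemma interp_bound:
  fixes xh :: "nat \<Rightarrow> real"
  assumes inc: "\<forall>i<n. xh i < xh (Suc i)" and t: "t \<in> {xh 0..xh n}"
  shows "\<bar>interp n xh v t\<bar> \<le> lebesgue_const n xh * supnorm n v"
proof -
  have S0: "0 \<le> supnorm n v" using supnorm_ge[of 0 n v] by simp
  have "\<bar>interp n xh v t\<bar> \<le> (\<Sum>j=0..n. \<bar>v j * lagr n xh j t\<bar>)"
    unfolding interp_def by (rule sum_abs)
  also have "\<dots> \<le> (\<Sum>j=0..n. supnorm n v * \<bar>lagr n xh j t\<bar>)"
    by (intro sum_mono) (auto simp: abs_mult intro: mult_right_mono supnorm_ge)
  also have "\<dots> = supnorm n v * (\<Sum>j=0..n. \<bar>lagr n xh j t\<bar>)"
    by (simp add: sum_distrib_left)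
  also have "\<dots> \<le> supnorm n v * lebesgue_const n xh"
    by (intro mult_left_mono leb_bound[OF inc t] S0)
  finally show ?thesis by (simp add: mult.commute)
qed

theorem theorem3:
  fixes n :: nat and x xh y :: "nat \<Rightarrow> real"
  assumes x_inc: "\<And>i. i < n \<Longrightarrow> x i < x (Suc i)"
      and xh_inc: "\<And>i. i < n \<Longrightarrow> xh i < xh (Suc i)"
      and ends0: "xh 0 = x 0" and endsn: "xh n = x n"
      and small: "lebesgue_const n xh * supnorm n (zvec n x xh) < 1"
  shows "\<forall>t\<in>{x 0..x n}.
     \<bar>errpoly n xh y (zvec n x xh) t\<bar> / (1 + lebesgue_const n xh * supnorm n (zvec n x xh))
       \<le> \<bar>bary n t xh y (lam n x) - interp n xh y t\<bar>
     \<and> \<bar>bary n t xh y (lam n x) - interp n xh y t\<bar>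
       \<le> \<bar>errpoly n xh y (zvec n x xh) t\<bar> / (1 - lebesgue_const n xh * supnorm n (zvec n x xh))
     \<and> (\<exists>y' :: nat \<Rightarrow> real. bary n t xh y (lam n x) = interp n xh y' t \<and>
          (\<forall>k\<in>{0..n}. \<bar>y' k - y k\<bar> \<le>
             (\<bar>zvec n x xh k\<bar> + lebesgue_const n xh * supnorm n (zvec n x xh))
             / (1 - lebesgue_const n xh * supnorm n (zvec n x xh)) * \<bar>y k\<bar>))"
proof
  fix t assume tI: "t \<in> {x 0..x n}"
  have inc: "\<forall>i<n. xh i < xh (Suc i)" using xh_inc by blast
  define z where "z = zvec n x xh"
  define c where "c = lebesgue_const n xh * supnorm n z"
  have t: "t \<in> {xh 0..xh n}" using tI ends0 endsn by simp
  have c1: "c < 1" using small unfolding c_def z_def .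
  have c0: "0 \<le> c"
  proof -
    have "\<bar>interp n xh z t\<bar> \<le> c" unfolding c_def by (rule interp_bound[OF inc t])
    then show ?thesis by linarith
  qed
  have zk: "\<bar>z k\<bar> \<le> supnorm n z" if "k \<le> n" for k using supnorm_ge that .
  have main: "\<bar>errpoly n xh y z t\<bar> / (1 + c)
       \<le> \<bar>bary n t xh y (lam n x) - interp n xh y t\<bar>
     \<and> \<bar>bary n t xh y (lam n x) - interp n xh y t\<bar>
       \<le> \<bar>errpoly n xh y z t\<bar> / (1 - c)
     \<and> (\<exists>y' :: nat \<Rightarrow> real. bary n t xh y (lam n x) = interp n xh y' t \<and>
          (\<forall>k\<in>{0..n}. \<bar>y' k - y k\<bar> \<le>
             (\<bar>z k\<bar> + c) / (1 - c) * \<bar>y k\<bar>))"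
  proof (cases "\<exists>k\<in>{0..n}. t = xh k")
    case True
    then obtain k where k: "k \<le> n" "t = xh k" by auto
    have sk: "(SOME k. k \<in> {0..n} \<and> t = xh k) = k"
    proof (rule some_equality)
      show "k \<in> {0..n} \<and> t = xh k" using k by simp
      fix m assume m: "m \<in> {0..n} \<and> t = xh m"
      then have m1: "m \<le> n" and m2: "xh m = xh k" using k by auto
      show "m = k" by (rule xh_inj[OF inc m1 k(1) m2])
    qed
    have b: "bary n t xh y (lam n x) = y k"
      unfolding bary_def using True sk by simp
    have e: "errpoly n xh y z t = 0"
      unfolding errpoly_def k(2) using interp_node[OF inc k(1)] by simp
    have "0 \<le> (\<bar>z j\<bar> + c) / (1 - c) * \<bar>y j\<bar>" for j
      using c0 c1 by simp
    then show ?thesis using b e interp_node[OF inc k(1), of y] k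
      by (intro conjI exI[of _ y]) auto
  next
    case False
    have nn: "t \<noteq> xh k" if "k \<le> n" for k using False that by auto
    define L where "L = (\<Prod>i\<in>{0..n}. t - xh i)"
    have L0: "L \<noteq> 0"
    proof -
      have "\<forall>i\<in>{0..n}. t - xh i \<noteq> 0" using nn by auto
      then show ?thesis unfolding L_def by (simp add: prod_zero_iff)
    qed
    define p where "p = interp n xh z t"
    have pb: "\<bar>p\<bar> \<le> c" unfolding p_def c_def by (rule interp_bound[OF inc t])
    have pos: "0 < 1 + p" using pb c1 by (simp add: abs_le_iff)
    have pc: "1 - c \<le> 1 + p" using pb by (simp add: abs_le_iff)
    have pc2: "1 + p \<le> 1 + c" using pb by (simp add: abs_le_iff)
    have lamx: "lam n x k = lam n xh k * (1 + z k)" if "k \<le> n" for k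
      using lam_nz[OF inc that] unfolding z_def zvec_def by (simp add: field_simps)
    have trm: "lam n x k * v / (t - xh k) = v * (1 + z k) * lagr n xh k t / L" if "k \<le> n" for k v
    proof -
      have "t - xh k \<noteq> 0" using nn[OF that] by simp
      then show ?thesis unfolding lagr_formula[of k n t xh, OF that nn[OF that]] lamx[OF that] L_def[symmetric]
        using L0 by (simp add: field_simps)
    qed
    have num: "(\<Sum>k=0..n. lam n x k * y k / (t - xh k)) = interp n xh (\<lambda>k. y k * (1 + z k)) t / L"
      unfolding interp_def sum_divide_distrib
    proof (intro sum.cong refl)
      fix k assume "k \<in> {0..n}"
      then have k: "k \<le> n" by simp
      show "lam n x k * y k / (t - xh k) = y k * (1 + z k) * lagr n xh k t / L"
        using trm[OF k, of "y k"] .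
    qed
    have den: "(\<Sum>k=0..n. lam n x k / (t - xh k)) = interp n xh (\<lambda>k. 1 + z k) t / L"
      unfolding interp_def sum_divide_distrib
    proof (intro sum.cong refl)
      fix k assume "k \<in> {0..n}"
      then have k: "k \<le> n" by simp
      show "lam n x k / (t - xh k) = (1 + z k) * lagr n xh k t / L"
        using trm[OF k, of 1] by simp
    qed
    have A: "interp n xh (\<lambda>k. y k * (1 + z k)) t = interp n xh y t + interp n xh (\<lambda>k. y k * z k) t"
      unfolding interp_def by (simp add: sum.distrib[symmetric] algebra_simps)
    have B: "interp n xh (\<lambda>k. 1 + z k) t = 1 + p"
      unfolding interp_def p_def using lagr_sum[OF inc, of t] by (simp add: sum.distrib algebra_simps)
    have bry: "bary n t xh y (lam n x) = interp n xh (\<lambda>k. y k * (1 + z k)) t / (1 + p)"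
      unfolding bary_def using False num den B L0 by simp
    have diff: "bary n t xh y (lam n x) - interp n xh y t = errpoly n xh y z t / (1 + p)"
      unfolding bry A errpoly_def p_def[symmetric] using pos by (simp add: field_simps)
    have ad: "\<bar>bary n t xh y (lam n x) - interp n xh y t\<bar> = \<bar>errpoly n xh y z t\<bar> / (1 + p)"
      unfolding diff using pos by (simp add: abs_divide)
    have i1: "\<bar>errpoly n xh y z t\<bar> / (1 + c) \<le> \<bar>errpoly n xh y z t\<bar> / (1 + p)"
      by (rule divide_left_mono) (use pos pc2 in auto)
    have i2: "\<bar>errpoly n xh y z t\<bar> / (1 + p) \<le> \<bar>errpoly n xh y z t\<bar> / (1 - c)"
      by (rule divide_left_mono) (use pos pc c1 in auto)
    define y' where "y' k = y k * (1 + z k) / (1 + p)" for k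
    have iy: "bary n t xh y (lam n x) = interp n xh y' t"
      unfolding bry interp_def y'_def sum_divide_distrib by (intro sum.cong refl) simp
    have yb: "\<bar>y' k - y k\<bar> \<le> (\<bar>z k\<bar> + c) / (1 - c) * \<bar>y k\<bar>" if "k \<in> {0..n}" for k
    proof -
      have "y' k - y k = y k * (z k - p) / (1 + p)" unfolding y'_def using pos by (simp add: field_simps)
      then have "\<bar>y' k - y k\<bar> = \<bar>y k\<bar> * \<bar>z k - p\<bar> / (1 + p)" using pos by (simp add: abs_divide abs_mult)
      also have "\<dots> \<le> \<bar>y k\<bar> * (\<bar>z k\<bar> + c) / (1 - c)"
      proof (rule frac_le)
        have "\<bar>z k - p\<bar> \<le> \<bar>z k\<bar> + c" using pb by linarith
        then show "\<bar>y k\<bar> * \<bar>z k - p\<bar> \<le> \<bar>y k\<bar> * (\<bar>z k\<bar> + c)" by (rule mult_left_mono) simp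
        show "0 \<le> \<bar>y k\<bar> * (\<bar>z k\<bar> + c)" using c0 by simp
        show "0 < 1 - c" using c1 by simp
        show "1 - c \<le> 1 + p" by (rule pc)
      qed
      finally show ?thesis by (simp add: mult.commute)
    qed
    show ?thesis using ad i1 i2 iy yb by (intro conjI exI[of _ y']) auto
  qed
  then show "\<bar>errpoly n xh y (zvec n x xh) t\<bar> / (1 + lebesgue_const n xh * supnorm n (zvec n x xh))
       \<le> \<bar>bary n t xh y (lam n x) - interp n xh y t\<bar>
     \<and> \<bar>bary n t xh y (lam n x) - interp n xh y t\<bar>
       \<le> \<bar>errpoly n xh y (zvec n x xh) t\<bar> / (1 - lebesgue_const n xh * supnorm n (zvec n x xh))
     \<and> (\<exists>y' :: nat \<Rightarrow> real. bary n t xh y (lam n x) = interp n xh y' t \<and>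
          (\<forall>k\<in>{0..n}. \<bar>y' k - y k\<bar> \<le>
             (\<bar>zvec n x xh k\<bar> + lebesgue_const n xh * supnorm n (zvec n x xh))
             / (1 - lebesgue_const n xh * supnorm n (zvec n x xh)) * \<bar>y k\<bar>))"
    by (simp only: c_def z_def)
qed

end
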